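(* Let $\{X_n\}_{n\ge0}$ be a time-homogeneous discrete-time Markov chain with countably infinite state space $\mathcal{X}=\{x_i\}_{i\in\mathbb{N}}$ and transition probabilities $p_{ik}=\mathbb{P}(X_{n+1}=x_k\mid X_n=x_i)$. Let $\mathcal{A}_{\mathcal{X}}$ be a real separable Hilbert space with orthonormal basis $\{e_i\}_{i\in\mathbb{N}}$, and set $c_{ki}:=p_{ik}$. Then: (a) the product $v\cdot w:=\sum_{k=1}^\infty\big(\sum_{i=1}^\infty v_iw_ic_{ki}\big)e_k$ defines a Hilbert evolution algebra structure on $\mathcal{A}_{\mathcal{X}}$ with orthonormal natural basis $\{e_i\}$ and structure constants $c_{ki}$ (a Markov Hilbert evolution algebra); (b) if moreover there exist positive reals $\alpha_k,\beta_i$ ($i,k\in\mathbb{N}$) and $M_1,M_2>0$ with $\sum_{k=1}^\infty p_{ik}\alpha_k\le M_1\beta_i$ for all $i$ and $\sum_{i=1}^\infty p_{ik}\beta_i\le M_2\alpha_k$ for all $k$, then the evolution operator $C$ has domain $D(C)=\mathcal{A}_{\mathcal{X}}$, is bounded with $\|C\|\le(M_1M_2)^{1/2}$, and for every $n\ge1$ and $i\in\mathbb{N}$, $$C^n(e_i)=\sum_{k=1}^\infty p^{(n)}_{ik}e_k,\qquad p^{(n)}_{ik}:=\mathbb{P}(X_n=x_k\mid X_0=x_i).$$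
   Context: A (separable) Hilbert evolution algebra is a real or complex separable Hilbert space $(\mathcal{A},\langle\cdot,\cdot\rangle)$ equipped with a bilinear product $\cdot$ such that: (i) there exist an orthonormal basis $\{e_i\}_{i\in\mathbb{N}}$ (an orthonormal natural basis) and scalars $\{c_{ki}\}$ (structure constants) with $e_i\cdot e_i=\sum_{k=1}^\infty c_{ki}e_k$ and $e_i\cdot e_j=0$ for $i\neq j$; (ii) every left multiplication $L_v(w)=v\cdot w$ is a bounded operator on $\mathcal{A}$. The evolution operator is the linear operator $C:D(C)\to\mathcal{A}$ with domain $D(C)=\{v=\sum_iv_ie_i:\ \sum_{k=1}^\infty|\sum_{i=1}^\infty v_ic_{ki}|^2<\infty\}$ and $C(v)=\sum_{k=1}^\infty\big(\sum_{i=1}^\infty v_ic_{ki}\big)e_k$. *)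

theory Defs
  imports "HOL-Analysis.Analysis"
begin

definition coord :: "(nat \<Rightarrow> 'a::real_inner) \<Rightarrow> 'a \<Rightarrow> nat \<Rightarrow> real" where
  "coord e v i = inner v (e i)"

definition orthonormal_basis :: "(nat \<Rightarrow> 'a::{real_inner,complete_space}) \<Rightarrow> bool" where
  "orthonormal_basis e \<longleftrightarrow>
     (\<forall>i j. inner (e i) (e j) = (if i = j then 1 else 0)) \<and>
     closure (span (range e)) = UNIV"

definition hilbert_evolution_algebra ::
  "('a \<Rightarrow> 'a \<Rightarrow> 'a) \<Rightarrow> (nat \<Rightarrow> 'a::{real_inner,complete_space}) \<Rightarrow> (nat \<Rightarrow> nat \<Rightarrow> real) \<Rightarrow> bool" where
  "hilbert_evolution_algebra prd e c \<longleftrightarrow>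
     orthonormal_basis e \<and>
     bilinear prd \<and>
     (\<forall>i. (\<lambda>k. c k i *\<^sub>R e k) sums prd (e i) (e i)) \<and>
     (\<forall>i j. i \<noteq> j \<longrightarrow> prd (e i) (e j) = 0) \<and>
     (\<forall>v. bounded_linear (prd v))"

definition evo_dom :: "(nat \<Rightarrow> 'a::real_inner) \<Rightarrow> (nat \<Rightarrow> nat \<Rightarrow> real) \<Rightarrow> 'a set" where
  "evo_dom e c = {v. (\<forall>k. summable (\<lambda>i. coord e v i * c k i)) \<and>
                     summable (\<lambda>k. (\<Sum>i. coord e v i * c k i)\<^sup>2)}"

definition evo_op :: "(nat \<Rightarrow> 'a::real_inner) \<Rightarrow> (nat \<Rightarrow> nat \<Rightarrow> real) \<Rightarrow> 'a \<Rightarrow> 'a" where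
  "evo_op e c v = (\<Sum>k. (\<Sum>i. coord e v i * c k i) *\<^sub>R e k)"

text \<open>Transition matrix of a time-homogeneous Markov chain on states x_0, x_1, ...:
  p i k = P(X_{n+1} = x_k | X_n = x_i).\<close>
definition stochastic_matrix :: "(nat \<Rightarrow> nat \<Rightarrow> real) \<Rightarrow> bool" where
  "stochastic_matrix p \<longleftrightarrow> (\<forall>i k. 0 \<le> p i k) \<and> (\<forall>i. (\<lambda>k. p i k) sums 1)"

text \<open>n-step transition probabilities p^(n)_ik = P(X_n = x_k | X_0 = x_i),
  given by the Chapman-Kolmogorov recursion.\<close>
fun n_step :: "(nat \<Rightarrow> nat \<Rightarrow> real) \<Rightarrow> nat \<Rightarrow> nat \<Rightarrow> nat \<Rightarrow> real" where
  "n_step p 0 i k = (if i = k then 1 else 0)"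
| "n_step p (Suc n) i k = (\<Sum>j. n_step p n i j * p j k)"

definition markov_prod :: "(nat \<Rightarrow> 'a::real_inner) \<Rightarrow> (nat \<Rightarrow> nat \<Rightarrow> real) \<Rightarrow> 'a \<Rightarrow> 'a \<Rightarrow> 'a" where
  "markov_prod e p v w = (\<Sum>k. (\<Sum>i. coord e v i * coord e w i * p i k) *\<^sub>R e k)"

end

theory Submission
  imports Defs
begin


lemma norm_sum_on:
  fixes e :: "nat \<Rightarrow> 'a::real_inner"
  assumes ON: "\<And>i j. inner (e i) (e j) = (if i = j then 1 else 0)" and fin: "finite A"
  shows "(norm (\<Sum>k\<in>A. c k *\<^sub>R e k))\<^sup>2 = (\<Sum>k\<in>A. (c k)\<^sup>2)"
proof -
  have aux: "\<And>x b. (x::real) * (if b then 1 else 0) = (if b then x else 0)" by simp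
  show ?thesis
    using fin unfolding power2_norm_eq_inner by (simp add: inner_sum_left inner_sum_right ON aux power2_eq_square)
qed

lemma bessel_partial:
  fixes e :: "nat \<Rightarrow> 'a::real_inner"
  assumes ON: "\<And>i j. inner (e i) (e j) = (if i = j then 1 else 0)"
  shows "(\<Sum>k<n. (inner v (e k))\<^sup>2) \<le> (norm v)\<^sup>2"
proof -
  define u where "u = (\<Sum>k<n. inner v (e k) *\<^sub>R e k)"
  have nu: "(norm u)\<^sup>2 = (\<Sum>k<n. (inner v (e k))\<^sup>2)"
    unfolding u_def by (rule norm_sum_on[OF ON]) simp
  have vu: "inner v u = (\<Sum>k<n. (inner v (e k))\<^sup>2)"
    unfolding u_def by (simp add: inner_sum_right power2_eq_square)
  have "0 \<le> (norm (v - u))\<^sup>2" by simp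
  also have "\<dots> = (norm v)\<^sup>2 - 2 * inner v u + (norm u)\<^sup>2"
    by (simp add: power2_norm_eq_inner inner_diff_left inner_diff_right inner_commute)
  finally show ?thesis using nu vu by simp
qed

lemma bessel:
  fixes e :: "nat \<Rightarrow> 'a::real_inner"
  assumes ON: "\<And>i j. inner (e i) (e j) = (if i = j then 1 else 0)"
  shows "summable (\<lambda>k. (inner v (e k))\<^sup>2) \<and> (\<Sum>k. (inner v (e k))\<^sup>2) \<le> (norm v)\<^sup>2"
proof -
  have s: "summable (\<lambda>k. (inner v (e k))\<^sup>2)"
    by (rule summableI_nonneg_bounded[where x="(norm v)\<^sup>2"]) (auto intro: bessel_partial[OF ON])
  then show ?thesis by (auto intro!: suminf_le_const bessel_partial[OF ON])
qed

lemma l2_summable: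
  fixes e :: "nat \<Rightarrow> 'a::{real_inner,complete_space}"
  assumes ON: "\<And>i j. inner (e i) (e j) = (if i = j then 1 else 0)"
    and sc: "summable (\<lambda>k. (c k)\<^sup>2)"
  shows "summable (\<lambda>k. c k *\<^sub>R e k)"
proof -
  define S where "S n = (\<Sum>k<n. c k *\<^sub>R e k)" for n
  define T where "T n = (\<Sum>k<n. (c k)\<^sup>2)" for n
  have key: "(norm (S m - S n))\<^sup>2 = \<bar>T m - T n\<bar>" for m n
  proof -
    have *: "(norm (S m - S n))\<^sup>2 = \<bar>T m - T n\<bar>" if "n \<le> m" for m n
    proof -
      have sub: "{..<n} \<subseteq> {..<m}" using that by auto
      have "S m - S n = (\<Sum>k\<in>{..<m} - {..<n}. c k *\<^sub>R e k)"
        unfolding S_def by (rule sum_diff[OF _ sub, symmetric]) simp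
      moreover have "T m - T n = (\<Sum>k\<in>{..<m} - {..<n}. (c k)\<^sup>2)"
        unfolding T_def by (rule sum_diff[OF _ sub, symmetric]) simp
      moreover have "T n \<le> T m" unfolding T_def by (rule sum_mono2) (use sub in auto)
      ultimately show ?thesis using norm_sum_on[OF ON, of "{..<m} - {..<n}" c] by simp
    qed
    show ?thesis
    proof (cases "n \<le> m")
      case True then show ?thesis by (rule *)
    next
      case False
      then have "(norm (S n - S m))\<^sup>2 = \<bar>T n - T m\<bar>" by (intro *) simp
      then show ?thesis by (simp add: norm_minus_commute abs_minus_commute)
    qed
  qed
  have "Cauchy T" using sc unfolding T_def by (simp add: summable_iff_convergent convergent_Cauchy)
  have "Cauchy S"
  proof (rule CauchyI)
    fix r :: real assume r: "0 < r"
    from \<open>Cauchy T\<close> obtain M where M: "\<forall>m\<ge>M. \<forall>n\<ge>M. norm (T m - T n) < r\<^sup>2"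
      using r unfolding Cauchy_iff by (meson zero_less_power)
    show "\<exists>M. \<forall>m\<ge>M. \<forall>n\<ge>M. norm (S m - S n) < r"
    proof (intro exI allI impI)
      fix m n assume "M \<le> m" "M \<le> n"
      then have "(norm (S m - S n))\<^sup>2 < r\<^sup>2" using M key by auto
      then show "norm (S m - S n) < r" using r by (simp add: power_less_imp_less_base)
    qed
  qed
  then show ?thesis unfolding summable_iff_convergent S_def by (simp add: Cauchy_convergent_iff)
qed

lemma l2_norm:
  fixes e :: "nat \<Rightarrow> 'a::{real_inner,complete_space}"
  assumes ON: "\<And>i j. inner (e i) (e j) = (if i = j then 1 else 0)"
    and sc: "summable (\<lambda>k. (c k)\<^sup>2)"
  shows "(norm (\<Sum>k. c k *\<^sub>R e k))\<^sup>2 = (\<Sum>k. (c k)\<^sup>2)"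
proof -
  have "(\<lambda>n. (norm (\<Sum>k<n. c k *\<^sub>R e k))\<^sup>2) \<longlonglongrightarrow> (norm (\<Sum>k. c k *\<^sub>R e k))\<^sup>2"
    by (intro tendsto_intros summable_LIMSEQ l2_summable[OF ON sc])
  moreover have "(\<lambda>n. (norm (\<Sum>k<n. c k *\<^sub>R e k))\<^sup>2) = (\<lambda>n. \<Sum>k<n. (c k)\<^sup>2)"
    by (intro ext norm_sum_on[OF ON]) simp
  ultimately show ?thesis using summable_LIMSEQ[OF sc] LIMSEQ_unique by metis
qed

lemma l2_coord:
  fixes e :: "nat \<Rightarrow> 'a::{real_inner,complete_space}"
  assumes ON: "\<And>i j. inner (e i) (e j) = (if i = j then 1 else 0)"
    and sc: "summable (\<lambda>k. (c k)\<^sup>2)"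
  shows "inner (\<Sum>k. c k *\<^sub>R e k) (e j) = c j"
proof -
  have "(\<lambda>n. inner (\<Sum>k<n. c k *\<^sub>R e k) (e j)) \<longlonglongrightarrow> inner (\<Sum>k. c k *\<^sub>R e k) (e j)"
    by (intro tendsto_intros summable_LIMSEQ l2_summable[OF ON sc])
  moreover have "inner (\<Sum>k<n. c k *\<^sub>R e k) (e j) = (if j < n then c j else 0)" for n
    by (simp add: inner_sum_left ON if_distrib cong: if_cong)
  moreover have "(\<lambda>n. if j < n then c j else 0) \<longlonglongrightarrow> c j"
    by (rule tendsto_eventually) (auto simp: eventually_sequentially intro: exI[of _ "Suc j"])
  ultimately show ?thesis using LIMSEQ_unique by fastforce
qed



lemma series_CS:
  fixes x y :: "nat \<Rightarrow> real"
  assumes sx: "summable (\<lambda>i. (x i)\<^sup>2)" and sy: "summable (\<lambda>i. (y i)\<^sup>2)"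
  shows "summable (\<lambda>i. \<bar>x i * y i\<bar>) \<and> (\<Sum>i. \<bar>x i * y i\<bar>)\<^sup>2 \<le> (\<Sum>i. (x i)\<^sup>2) * (\<Sum>i. (y i)\<^sup>2)"
proof -
  have le: "\<bar>x i * y i\<bar> \<le> (x i)\<^sup>2 + (y i)\<^sup>2" for i
  proof -
    have "0 \<le> (\<bar>x i\<bar> - \<bar>y i\<bar>)\<^sup>2" by simp
    then have "2 * (\<bar>x i\<bar> * \<bar>y i\<bar>) \<le> (x i)\<^sup>2 + (y i)\<^sup>2"
      by (simp add: power2_diff)
    moreover have "0 \<le> \<bar>x i\<bar> * \<bar>y i\<bar>" by simp
    ultimately have "\<bar>x i\<bar> * \<bar>y i\<bar> \<le> (x i)\<^sup>2 + (y i)\<^sup>2" by linarith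
    then show ?thesis by (simp add: abs_mult)
  qed
  have s: "summable (\<lambda>i. \<bar>x i * y i\<bar>)"
    by (rule summable_comparison_test[OF _ summable_add[OF sx sy]]) (use le in auto)
  have part: "(\<Sum>i<n. \<bar>x i * y i\<bar>)\<^sup>2 \<le> (\<Sum>i. (x i)\<^sup>2) * (\<Sum>i. (y i)\<^sup>2)" for n
  proof -
    have "(\<Sum>i<n. \<bar>x i * y i\<bar>)\<^sup>2 = (\<Sum>i<n. \<bar>x i\<bar> * \<bar>y i\<bar>)\<^sup>2" by (simp add: abs_mult)
    also have "\<dots> \<le> (\<Sum>i<n. \<bar>x i\<bar>\<^sup>2) * (\<Sum>i<n. \<bar>y i\<bar>\<^sup>2)" by (rule Cauchy_Schwarz_ineq_sum)
    also have "\<dots> = (\<Sum>i<n. (x i)\<^sup>2) * (\<Sum>i<n. (y i)\<^sup>2)" by simp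
    also have "\<dots> \<le> (\<Sum>i. (x i)\<^sup>2) * (\<Sum>i. (y i)\<^sup>2)"
      by (intro mult_mono sum_le_suminf sx sy sum_nonneg suminf_nonneg) auto
    finally show ?thesis .
  qed
  have "(\<lambda>n. (\<Sum>i<n. \<bar>x i * y i\<bar>)\<^sup>2) \<longlonglongrightarrow> (\<Sum>i. \<bar>x i * y i\<bar>)\<^sup>2"
    by (intro tendsto_intros summable_LIMSEQ s)
  then have "(\<Sum>i. \<bar>x i * y i\<bar>)\<^sup>2 \<le> (\<Sum>i. (x i)\<^sup>2) * (\<Sum>i. (y i)\<^sup>2)"
    by (rule LIMSEQ_le_const2) (use part in auto)
  with s show ?thesis by simp
qed

lemma double_le:
  fixes f :: "nat \<Rightarrow> nat \<Rightarrow> real"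
  assumes nn: "\<And>i k. 0 \<le> f i k" and si: "\<And>i. summable (f i)"
    and ss: "summable (\<lambda>i. suminf (f i))"
  shows "(\<forall>k. summable (\<lambda>i. f i k)) \<and> summable (\<lambda>k. \<Sum>i. f i k) \<and> (\<Sum>k. \<Sum>i. f i k) \<le> (\<Sum>i. \<Sum>k. f i k)"
proof -
  have sk: "summable (\<lambda>i. f i k)" for k
  proof (rule summable_comparison_test[OF _ ss])
    have "f i k \<le> suminf (f i)" for i
      using sum_le_suminf[OF si, of "{k}" i] nn by auto
    then show "\<exists>N. \<forall>n\<ge>N. norm (f n k) \<le> suminf (f n)" using nn by auto
  qed
  have bd: "(\<Sum>k<K. \<Sum>i. f i k) \<le> (\<Sum>i. \<Sum>k. f i k)" for K
  proof -
    have "(\<Sum>k<K. \<Sum>i. f i k) = (\<Sum>i. \<Sum>k<K. f i k)"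
      by (rule suminf_sum[symmetric]) (use sk in auto)
    also have "\<dots> \<le> (\<Sum>i. \<Sum>k. f i k)"
    proof (rule suminf_le)
      show "\<And>n. (\<Sum>k<K. f n k) \<le> suminf (f n)" by (rule sum_le_suminf[OF si]) (auto simp: nn)
      show "summable (\<lambda>i. \<Sum>k<K. f i k)" by (rule summable_sum) (use sk in auto)
    qed (rule ss)
    finally show ?thesis .
  qed
  have s: "summable (\<lambda>k. \<Sum>i. f i k)"
    by (rule summableI_nonneg_bounded[OF _ bd]) (auto intro: suminf_nonneg sk nn)
  show ?thesis using sk s bd by (auto intro: suminf_le_const)
qed


lemma coord_of_sums:
  fixes e :: "nat \<Rightarrow> 'a::real_inner"
  assumes ON: "\<And>i j. inner (e i) (e j) = (if i = j then 1 else 0)"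
    and sm: "(\<lambda>k. c k *\<^sub>R e k) sums w"
  shows "inner w (e j) = c j"
proof -
  have "(\<lambda>n. inner (\<Sum>k<n. c k *\<^sub>R e k) (e j)) \<longlonglongrightarrow> inner w (e j)"
    using sm unfolding sums_def by (intro tendsto_intros)
  moreover have "inner (\<Sum>k<n. c k *\<^sub>R e k) (e j) = (if j < n then c j else 0)" for n
    by (simp add: inner_sum_left ON if_distrib cong: if_cong)
  moreover have "(\<lambda>n. if j < n then c j else 0) \<longlonglongrightarrow> c j"
    by (rule tendsto_eventually) (auto simp: eventually_sequentially intro: exI[of _ "Suc j"])
  ultimately show ?thesis using LIMSEQ_unique by fastforce
qed

lemma l2_bound:
  fixes e :: "nat \<Rightarrow> 'a::{real_inner,complete_space}"
  assumes ON: "\<And>i j. inner (e i) (e j) = (if i = j then 1 else 0)"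
    and sc: "summable (\<lambda>k. (c k)\<^sup>2)" and le: "(\<Sum>k. (c k)\<^sup>2) \<le> K\<^sup>2" and K: "0 \<le> K"
  shows "norm (\<Sum>k. c k *\<^sub>R e k) \<le> K"
  using l2_norm[OF ON sc] le K by (metis power2_le_imp_le)

lemma coord_add: "coord e (x + y) i = coord e x i + coord e y i"
  by (simp add: coord_def inner_add_left)
lemma coord_scale: "coord e (r *\<^sub>R x) i = r * coord e x i"
  by (simp add: coord_def)

lemma lin_helper:
  fixes e :: "nat \<Rightarrow> 'a::{real_inner,complete_space}"
  assumes ON: "\<And>i j. inner (e i) (e j) = (if i = j then 1 else 0)"
    and s1: "\<And>w k. summable (\<lambda>i. g k i * coord e w i)"
    and s2: "\<And>w. summable (\<lambda>k. (\<Sum>i. g k i * coord e w i)\<^sup>2)"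
  shows "(\<Sum>k. (\<Sum>i. g k i * coord e (x + y) i) *\<^sub>R e k) =
           (\<Sum>k. (\<Sum>i. g k i * coord e x i) *\<^sub>R e k) + (\<Sum>k. (\<Sum>i. g k i * coord e y i) *\<^sub>R e k)"
    and "(\<Sum>k. (\<Sum>i. g k i * coord e (r *\<^sub>R x) i) *\<^sub>R e k) = r *\<^sub>R (\<Sum>k. (\<Sum>i. g k i * coord e x i) *\<^sub>R e k)"
proof -
  have sm: "(\<lambda>k. (\<Sum>i. g k i * coord e w i) *\<^sub>R e k) sums (\<Sum>k. (\<Sum>i. g k i * coord e w i) *\<^sub>R e k)" for w
    by (rule summable_sums, rule l2_summable[OF ON s2])
  have ca: "(\<Sum>i. g k i * coord e (x + y) i) = (\<Sum>i. g k i * coord e x i) + (\<Sum>i. g k i * coord e y i)" for k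
    by (simp add: coord_add distrib_left suminf_add[OF s1 s1])
  have cs: "(\<Sum>i. g k i * coord e (r *\<^sub>R x) i) = r * (\<Sum>i. g k i * coord e x i)" for k
  proof -
    have "(\<Sum>i. g k i * coord e (r *\<^sub>R x) i) = (\<Sum>i. r * (g k i * coord e x i))"
      by (simp add: coord_scale ac_simps)
    also have "\<dots> = r * (\<Sum>i. g k i * coord e x i)" by (rule suminf_mult[OF s1])
    finally show ?thesis .
  qed
  show "(\<Sum>k. (\<Sum>i. g k i * coord e (x + y) i) *\<^sub>R e k) =
           (\<Sum>k. (\<Sum>i. g k i * coord e x i) *\<^sub>R e k) + (\<Sum>k. (\<Sum>i. g k i * coord e y i) *\<^sub>R e k)"
  proof -
    have "(\<lambda>k. (\<Sum>i. g k i * coord e x i) *\<^sub>R e k + (\<Sum>i. g k i * coord e y i) *\<^sub>R e k) sums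
       (\<Sum>k. (\<Sum>i. g k i * coord e (x + y) i) *\<^sub>R e k)"
      using sm[of "x+y"] by (simp add: ca scaleR_add_left)
    from sums_unique2[OF this sums_add[OF sm[of x] sm[of y]]] show ?thesis .
  qed
  show "(\<Sum>k. (\<Sum>i. g k i * coord e (r *\<^sub>R x) i) *\<^sub>R e k) = r *\<^sub>R (\<Sum>k. (\<Sum>i. g k i * coord e x i) *\<^sub>R e k)"
  proof -
    have "(\<lambda>k. r *\<^sub>R ((\<Sum>i. g k i * coord e x i) *\<^sub>R e k)) sums
       (\<Sum>k. (\<Sum>i. g k i * coord e (r *\<^sub>R x) i) *\<^sub>R e k)"
      using sm[of "r *\<^sub>R x"] by (simp add: cs)
    from sums_unique2[OF this sums_scaleR_right[OF sm[of x], of r]] show ?thesis .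
  qed
qed

lemma stoch_facts:
  assumes "stochastic_matrix p"
  shows "0 \<le> p i k" "summable (p i)" "suminf (p i) = 1" "p i k \<le> 1"
proof -
  show p0: "0 \<le> p i k" "summable (p i)" "suminf (p i) = 1"
    using assms unfolding stochastic_matrix_def by (auto intro: sums_summable sums_unique[symmetric])
  moreover have "(\<Sum>j\<in>{k}. p i j) \<le> suminf (p i)"
    by (rule sum_le_suminf) (use assms in \<open>auto simp: stochastic_matrix_def intro: sums_summable\<close>)
  ultimately show "p i k \<le> 1" by simp
qed

lemma markov_a:
  fixes e :: "nat \<Rightarrow> 'a::{real_inner,complete_space}"
  assumes ON: "\<And>i j. inner (e i) (e j) = (if i = j then 1 else 0)"
    and st: "stochastic_matrix p"
  shows "(\<forall>k. summable (\<lambda>i. coord e v i * coord e w i * p i k)) \<and>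
         summable (\<lambda>k. (\<Sum>i. coord e v i * coord e w i * p i k)\<^sup>2) \<and>
         (\<lambda>k. (\<Sum>i. coord e v i * coord e w i * p i k) *\<^sub>R e k) sums markov_prod e p v w \<and>
         norm (markov_prod e p v w) \<le> norm v * norm w"
proof -
  note sf = stoch_facts[OF st]
  define a where "a i = \<bar>coord e v i * coord e w i\<bar>" for i
  define S where "S = (\<Sum>i. a i)"
  have bv: "summable (\<lambda>i. (coord e v i)\<^sup>2) \<and> (\<Sum>i. (coord e v i)\<^sup>2) \<le> (norm v)\<^sup>2"
    using bessel[OF ON, of v] by (simp add: coord_def)
  have bw: "summable (\<lambda>i. (coord e w i)\<^sup>2) \<and> (\<Sum>i. (coord e w i)\<^sup>2) \<le> (norm w)\<^sup>2"
    using bessel[OF ON, of w] by (simp add: coord_def)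
  have cs: "summable a \<and> S\<^sup>2 \<le> (\<Sum>i. (coord e v i)\<^sup>2) * (\<Sum>i. (coord e w i)\<^sup>2)"
    unfolding a_def S_def using series_CS bv bw by blast
  have sa: "summable a" using cs by simp
  have a0: "0 \<le> a i" for i by (simp add: a_def)
  have S0: "0 \<le> S" unfolding S_def using sa a0 by (simp add: suminf_nonneg)
  have "S\<^sup>2 \<le> (norm v)\<^sup>2 * (norm w)\<^sup>2"
    using cs bv bw by (meson order_trans mult_mono suminf_nonneg zero_le_power2 norm_ge_zero)
  then have Sle: "S \<le> norm v * norm w"
    by (metis power2_le_imp_le power_mult_distrib mult_nonneg_nonneg norm_ge_zero)
  have apk: "a i * p i k \<le> a i" for i k by (rule mult_left_le[OF sf(4) a0])
  have tb: "\<bar>coord e v i * coord e w i * p i k\<bar> = a i * p i k" for i k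
    using sf(1)[of i k] by (simp add: a_def abs_mult)
  have s1: "summable (\<lambda>i. coord e v i * coord e w i * p i k)" for k
  proof (rule summable_comparison_test[OF _ sa])
    show "\<exists>N. \<forall>n\<ge>N. norm (coord e v n * coord e w n * p n k) \<le> a n"
      using tb apk by simp
  qed
  define B where "B k = (\<Sum>i. a i * p i k)" for k
  have sB1: "summable (\<lambda>i. a i * p i k)" for k
    by (rule summable_comparison_test[OF _ sa]) (auto simp: a0 sf(1) apk)
  have dl: "(\<forall>k. summable (\<lambda>i. a i * p i k)) \<and> summable (\<lambda>k. \<Sum>i. a i * p i k) \<and>
      (\<Sum>k. \<Sum>i. a i * p i k) \<le> (\<Sum>i. \<Sum>k. a i * p i k)"
    by (rule double_le) (auto simp: a0 sf summable_mult suminf_mult sa)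
  have sBk: "summable B" using dl unfolding B_def[abs_def] by simp
  have sumB: "(\<Sum>k. B k) \<le> S"
    using dl unfolding B_def[abs_def] S_def by (simp add: suminf_mult sf)
  have B0: "0 \<le> B k" for k unfolding B_def by (rule suminf_nonneg[OF sB1]) (simp add: a0 sf)
  have BS: "B k \<le> S" for k unfolding B_def S_def
    by (rule suminf_le[OF _ sB1 sa]) (auto simp: a0 sf apk)
  define b where "b k = (\<Sum>i. coord e v i * coord e w i * p i k)" for k
  have bB: "\<bar>b k\<bar> \<le> B k" for k
  proof -
    have "summable (\<lambda>i. \<bar>coord e v i * coord e w i * p i k\<bar>)" using sB1 tb by simp
    then show ?thesis unfolding b_def B_def using summable_rabs tb by fastforce
  qed
  have b2: "(b k)\<^sup>2 \<le> S * B k" for k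
  proof -
    have "(b k)\<^sup>2 = \<bar>b k\<bar>\<^sup>2" by simp
    also have "\<dots> \<le> (B k)\<^sup>2" by (rule power_mono[OF bB]) simp
    also have "\<dots> \<le> S * B k" using BS B0 by (simp add: power2_eq_square mult_right_mono)
    finally show ?thesis .
  qed
  have sb2: "summable (\<lambda>k. (b k)\<^sup>2)"
    by (rule summable_comparison_test[OF _ summable_mult[OF sBk, of S]]) (use b2 in auto)
  have "(\<Sum>k. (b k)\<^sup>2) \<le> (\<Sum>k. S * B k)" by (rule suminf_le[OF b2 sb2 summable_mult[OF sBk]])
  also have "\<dots> = S * (\<Sum>k. B k)" by (rule suminf_mult[OF sBk])
  also have "\<dots> \<le> S * S" using sumB S0 by (rule mult_left_mono)
  finally have sb2le: "(\<Sum>k. (b k)\<^sup>2) \<le> S\<^sup>2" by (simp add: power2_eq_square)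
  have mp: "markov_prod e p v w = (\<Sum>k. b k *\<^sub>R e k)" unfolding markov_prod_def b_def ..
  have sums: "(\<lambda>k. b k *\<^sub>R e k) sums markov_prod e p v w"
    unfolding mp by (rule summable_sums, rule l2_summable[OF ON sb2])
  have "norm (markov_prod e p v w) \<le> S"
    unfolding mp by (rule l2_bound[OF ON sb2 sb2le S0])
  with Sle have "norm (markov_prod e p v w) \<le> norm v * norm w" by simp
  with s1 sums sb2 show ?thesis unfolding b_def by simp
qed

lemma evo_b:
  fixes e :: "nat \<Rightarrow> 'a::{real_inner,complete_space}"
  assumes ON: "\<And>i j. inner (e i) (e j) = (if i = j then 1 else 0)"
    and st: "stochastic_matrix p"
    and al: "\<And>k. 0 < \<alpha> k" and be: "\<And>i. 0 < \<beta> i" and M1: "0 < M1" and M2: "0 < M2"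
    and H1: "\<And>i. summable (\<lambda>k. p i k * \<alpha> k) \<and> (\<Sum>k. p i k * \<alpha> k) \<le> M1 * \<beta> i"
    and H2: "\<And>k. summable (\<lambda>i. p i k * \<beta> i) \<and> (\<Sum>i. p i k * \<beta> i) \<le> M2 * \<alpha> k"
  shows "(\<forall>k. summable (\<lambda>i. coord e v i * p i k)) \<and>
         summable (\<lambda>k. (\<Sum>i. coord e v i * p i k)\<^sup>2) \<and>
         (\<Sum>k. (\<Sum>i. coord e v i * p i k)\<^sup>2) \<le> M1 * M2 * (norm v)\<^sup>2"
proof -
  note sf = stoch_facts[OF st]
  have bv: "summable (\<lambda>i. (coord e v i)\<^sup>2) \<and> (\<Sum>i. (coord e v i)\<^sup>2) \<le> (norm v)\<^sup>2"
    using bessel[OF ON, of v] by (simp add: coord_def)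
  have sv: "summable (\<lambda>i. (coord e v i)\<^sup>2)" using bv by simp
  have pa: "p i k * \<alpha> k \<le> M1 * \<beta> i" for i k
  proof -
    have "(\<Sum>j\<in>{k}. p i j * \<alpha> j) \<le> (\<Sum>j. p i j * \<alpha> j)"
      by (rule sum_le_suminf) (auto simp: H1 intro!: mult_nonneg_nonneg sf(1) less_imp_le[OF al])
    then show ?thesis using H1[of i] by simp
  qed
  have pb: "p i k / \<beta> i \<le> M1 / \<alpha> k" for i k
    using pa[of i k] al[of k] be[of i] by (simp add: divide_simps mult.commute)
  define y where "y k i = (coord e v i)\<^sup>2 * p i k / \<beta> i" for k i
  have y0: "0 \<le> y k i" for k i using sf(1) be unfolding y_def by (simp add: less_imp_le)
  have yle: "y k i \<le> M1 / \<alpha> k * (coord e v i)\<^sup>2" for k i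
  proof -
    have "y k i = (coord e v i)\<^sup>2 * (p i k / \<beta> i)" unfolding y_def by simp
    also have "\<dots> \<le> (coord e v i)\<^sup>2 * (M1 / \<alpha> k)" by (rule mult_left_mono[OF pb]) simp
    finally show ?thesis by (simp add: ac_simps)
  qed
  have sy: "summable (y k)" for k
  proof (rule summable_comparison_test[OF _ summable_mult[OF sv, of "M1 / \<alpha> k"]])
    have "\<forall>n. norm (y k n) \<le> M1 / \<alpha> k * (coord e v n)\<^sup>2"
      using y0 yle by (metis abs_of_nonneg real_norm_def)
    then show "\<exists>N. \<forall>n\<ge>N. norm (y k n) \<le> M1 / \<alpha> k * (coord e v n)\<^sup>2" by blast
  qed
  have csk: "summable (\<lambda>i. \<bar>coord e v i * p i k\<bar>) \<and> (\<Sum>i. \<bar>coord e v i * p i k\<bar>)\<^sup>2 \<le> (\<Sum>i. p i k * \<beta> i) * (\<Sum>i. y k i)" for k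
  proof -
    define X where "X i = sqrt (p i k * \<beta> i)" for i
    define Y where "Y i = \<bar>coord e v i\<bar> * sqrt (p i k / \<beta> i)" for i
    have X2: "(X i)\<^sup>2 = p i k * \<beta> i" for i unfolding X_def using sf(1) be[of i] by simp
    have Y2: "(Y i)\<^sup>2 = y k i" for i unfolding Y_def y_def using sf(1)[of i k] be[of i]
      by (simp add: power_mult_distrib)
    have XY: "\<bar>X i * Y i\<bar> = \<bar>coord e v i * p i k\<bar>" for i
    proof -
      have "X i * Y i = \<bar>coord e v i\<bar> * (sqrt (p i k * \<beta> i) * sqrt (p i k / \<beta> i))"
        unfolding X_def Y_def by (rule mult.left_commute)
      also have "sqrt (p i k * \<beta> i) * sqrt (p i k / \<beta> i) = sqrt (p i k * \<beta> i * (p i k / \<beta> i))"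
        by (rule real_sqrt_mult[symmetric])
      also have "p i k * \<beta> i * (p i k / \<beta> i) = (p i k)\<^sup>2" using be[of i] by (simp add: power2_eq_square)
      finally show ?thesis using sf(1)[of i k] by (simp add: abs_mult)
    qed
    have "summable (\<lambda>i. (X i)\<^sup>2)" "summable (\<lambda>i. (Y i)\<^sup>2)" using H2[of k] sy[of k]
      by (simp_all add: X2 Y2)
    from series_CS[OF this] show ?thesis by (simp add: XY X2 Y2)
  qed
  define f where "f i k = (coord e v i)\<^sup>2 / \<beta> i * (p i k * \<alpha> k)" for i k
  have f0: "0 \<le> f i k" for i k unfolding f_def using be[of i] al[of k] sf(1)[of i k] by simp
  have sfi: "summable (f i)" for i unfolding f_def[abs_def] by (rule summable_mult) (use H1 in simp)
  have fsum: "suminf (f i) \<le> M1 * (coord e v i)\<^sup>2" for i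
  proof -
    have "suminf (f i) = (coord e v i)\<^sup>2 / \<beta> i * (\<Sum>k. p i k * \<alpha> k)"
      unfolding f_def[abs_def] by (rule suminf_mult) (use H1 in simp)
    also have "\<dots> \<le> (coord e v i)\<^sup>2 / \<beta> i * (M1 * \<beta> i)"
      by (rule mult_left_mono) (use H1 be[of i] in auto)
    also have "\<dots> = M1 * (coord e v i)\<^sup>2" using be[of i] by simp
    finally show ?thesis .
  qed
  have ssf: "summable (\<lambda>i. suminf (f i))"
    by (rule summable_comparison_test[OF _ summable_mult[OF sv, of M1]])
       (use fsum suminf_nonneg[OF sfi f0] in auto)
  have dl: "(\<forall>k. summable (\<lambda>i. f i k)) \<and> summable (\<lambda>k. \<Sum>i. f i k) \<and> (\<Sum>k. \<Sum>i. f i k) \<le> (\<Sum>i. \<Sum>k. f i k)"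
    by (rule double_le[OF f0 sfi ssf])
  have fk: "(\<Sum>i. f i k) = \<alpha> k * (\<Sum>i. y k i)" for k
  proof -
    have "(\<lambda>i. f i k) = (\<lambda>i. \<alpha> k * y k i)" unfolding f_def y_def by (auto simp: field_simps)
    then show ?thesis using suminf_mult[OF sy[of k], of "\<alpha> k"] by simp
  qed
  define b where "b k = (\<Sum>i. coord e v i * p i k)" for k
  have s1: "summable (\<lambda>i. coord e v i * p i k)" for k
    by (rule summable_rabs_cancel) (use csk[of k] in simp)
  have b2: "(b k)\<^sup>2 \<le> M2 * (\<Sum>i. f i k)" for k
  proof -
    have bk: "\<bar>b k\<bar> \<le> (\<Sum>i. \<bar>coord e v i * p i k\<bar>)" unfolding b_def
      by (rule summable_rabs) (use csk[of k] in simp)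
    have "(b k)\<^sup>2 \<le> (\<Sum>i. \<bar>coord e v i * p i k\<bar>)\<^sup>2"
      using power_mono[OF bk abs_ge_zero, of 2] by simp
    also have "\<dots> \<le> (\<Sum>i. p i k * \<beta> i) * (\<Sum>i. y k i)" using csk[of k] by (rule conjunct2)
    also have "\<dots> \<le> (M2 * \<alpha> k) * (\<Sum>i. y k i)"
      by (rule mult_right_mono) (use H2 suminf_nonneg[OF sy y0] in auto)
    also have "\<dots> = M2 * (\<Sum>i. f i k)" by (simp add: fk)
    finally show ?thesis .
  qed
  have sF: "summable (\<lambda>k. \<Sum>i. f i k)" using dl by blast
  have sb2: "summable (\<lambda>k. (b k)\<^sup>2)"
    by (rule summable_comparison_test[OF _ summable_mult[OF sF, of M2]]) (use b2 in auto)
  have "(\<Sum>k. (b k)\<^sup>2) \<le> (\<Sum>k. M2 * (\<Sum>i. f i k))" by (rule suminf_le[OF b2 sb2 summable_mult[OF sF]])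
  also have "\<dots> = M2 * (\<Sum>k. \<Sum>i. f i k)" by (rule suminf_mult[OF sF])
  also have "\<dots> \<le> M2 * (\<Sum>i. \<Sum>k. f i k)" using dl M2 by (simp add: mult_left_mono)
  also have "(\<Sum>i. \<Sum>k. f i k) \<le> (\<Sum>i. M1 * (coord e v i)\<^sup>2)"
    by (rule suminf_le[OF fsum ssf summable_mult[OF sv]])
  also have "\<dots> = M1 * (\<Sum>i. (coord e v i)\<^sup>2)" by (rule suminf_mult[OF sv])
  also have "\<dots> \<le> M1 * (norm v)\<^sup>2" using bv M1 by (simp add: mult_left_mono)
  finally have "(\<Sum>k. (b k)\<^sup>2) \<le> M2 * (M1 * (norm v)\<^sup>2)" using M2 by (simp add: mult_left_mono)
  then have "(\<Sum>k. (b k)\<^sup>2) \<le> M1 * M2 * (norm v)\<^sup>2" by (simp only: mult.assoc mult.left_commute)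
  with s1 sb2 show ?thesis unfolding b_def by simp
qed

lemma mp_alt: "markov_prod e p v w = (\<Sum>k. (\<Sum>i. (coord e v i * p i k) * coord e w i) *\<^sub>R e k)"
  unfolding markov_prod_def by (simp add: algebra_simps)

lemma mp_comm: "markov_prod e p v w = markov_prod e p w v"
  unfolding markov_prod_def by (simp add: algebra_simps)

lemma evo_alt: "evo_op e (\<lambda>k i. p i k) w = (\<Sum>k. (\<Sum>i. p i k * coord e w i) *\<^sub>R e k)"
  unfolding evo_op_def by (simp add: algebra_simps)

lemma evo_def2: "evo_op e (\<lambda>k i. p i k) w = (\<Sum>k. (\<Sum>i. coord e w i * p i k) *\<^sub>R e k)"
  unfolding evo_op_def by simp

theorem mainTheorem4:
  fixes e :: "nat \<Rightarrow> 'a::{real_inner,complete_space}"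
    and p :: "nat \<Rightarrow> nat \<Rightarrow> real"
  assumes "orthonormal_basis e"
    and "stochastic_matrix p"
  shows "(\<forall>v w. (\<forall>k. summable (\<lambda>i. coord e v i * coord e w i * p i k)) \<and>
                (\<lambda>k. (\<Sum>i. coord e v i * coord e w i * p i k) *\<^sub>R e k) sums markov_prod e p v w) \<and>
         hilbert_evolution_algebra (markov_prod e p) e (\<lambda>k i. p i k) \<and>
         (\<forall>(\<alpha>::nat \<Rightarrow> real) (\<beta>::nat \<Rightarrow> real) (M1::real) (M2::real).
            (\<forall>k. 0 < \<alpha> k) \<and> (\<forall>i. 0 < \<beta> i) \<and> 0 < M1 \<and> 0 < M2 \<and>
            (\<forall>i. summable (\<lambda>k. p i k * \<alpha> k) \<and> (\<Sum>k. p i k * \<alpha> k) \<le> M1 * \<beta> i) \<and>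
            (\<forall>k. summable (\<lambda>i. p i k * \<beta> i) \<and> (\<Sum>i. p i k * \<beta> i) \<le> M2 * \<alpha> k)
          \<longrightarrow> evo_dom e (\<lambda>k i. p i k) = UNIV \<and>
              bounded_linear (evo_op e (\<lambda>k i. p i k)) \<and>
              onorm (evo_op e (\<lambda>k i. p i k)) \<le> sqrt (M1 * M2) \<and>
              (\<forall>n\<ge>1. \<forall>i. (\<lambda>k. n_step p n i k *\<^sub>R e k) sums ((evo_op e (\<lambda>k i. p i k) ^^ n) (e i))))"
proof -
  have ON: "\<And>i j. inner (e i) (e j) = (if i = j then 1 else 0)"
    using assms(1) unfolding orthonormal_basis_def by blast
  note MA = markov_a[OF ON assms(2)]
  note sf = stoch_facts[OF assms(2)]
  have ce: "coord e (e i) j = (if i = j then 1 else 0)" for i j by (simp add: coord_def ON)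
  have partA: "\<forall>v w. (\<forall>k. summable (\<lambda>i. coord e v i * coord e w i * p i k)) \<and>
                (\<lambda>k. (\<Sum>i. coord e v i * coord e w i * p i k) *\<^sub>R e k) sums markov_prod e p v w"
    using MA by blast
  have bl: "bounded_linear (markov_prod e p v)" for v
  proof -
    have s1: "summable (\<lambda>i. (coord e v i * p i k) * coord e w i)" for w k
      using MA[of v w] by (simp add: algebra_simps)
    have s2: "summable (\<lambda>k. (\<Sum>i. (coord e v i * p i k) * coord e w i)\<^sup>2)" for w
      using MA[of v w] by (simp add: algebra_simps)
    note LH = lin_helper[OF ON s1 s2]
    show ?thesis
    proof (rule bounded_linear_intro[where K="norm v"])
      show "markov_prod e p v (x + y) = markov_prod e p v x + markov_prod e p v y" for x y
        unfolding mp_alt by (rule LH(1))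
      show "markov_prod e p v (r *\<^sub>R x) = r *\<^sub>R markov_prod e p v x" for r x
        unfolding mp_alt by (rule LH(2))
      show "norm (markov_prod e p v x) \<le> norm x * norm v" for x
        using MA[of v x] by (simp add: mult.commute)
    qed
  qed
  have hea: "hilbert_evolution_algebra (markov_prod e p) e (\<lambda>k i. p i k)"
    unfolding hilbert_evolution_algebra_def
  proof (intro conjI allI impI)
    show "orthonormal_basis e" by (rule assms(1))
    show "bilinear (markov_prod e p)"
      unfolding bilinear_def
    proof (intro conjI allI)
      show "linear (markov_prod e p x)" for x using bl[of x] by (rule bounded_linear.linear)
      show "linear (\<lambda>x. markov_prod e p x y)" for y
        using bl[of y] by (simp add: mp_comm[of e p _ y] bounded_linear.linear)
    qed
    show "bounded_linear (markov_prod e p v)" for v by (rule bl)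
    show "(\<lambda>k. p i k *\<^sub>R e k) sums markov_prod e p (e i) (e i)" for i
    proof -
      have "(\<Sum>j. coord e (e i) j * coord e (e i) j * p j k) = p i k" for k
      proof -
        have "(\<lambda>j. coord e (e i) j * coord e (e i) j * p j k) = (\<lambda>j. if j = i then p j k else 0)"
          by (auto simp: ce)
        then show ?thesis using sums_unique[OF sums_single[of i "\<lambda>j. p j k"]] by simp
      qed
      then show ?thesis using MA[of "e i" "e i"] by simp
    qed
    show "markov_prod e p (e i) (e j) = 0" if "i \<noteq> j" for i j
    proof -
      have "(\<lambda>l. coord e (e i) l * coord e (e j) l * p l k) = (\<lambda>l. 0)" for k
        using that by (auto simp: ce)
      then show ?thesis unfolding markov_prod_def by simp
    qed
  qed
  have partB: "evo_dom e (\<lambda>k i. p i k) = UNIV \<and>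
              bounded_linear (evo_op e (\<lambda>k i. p i k)) \<and>
              onorm (evo_op e (\<lambda>k i. p i k)) \<le> sqrt (M1 * M2) \<and>
              (\<forall>n\<ge>1. \<forall>i. (\<lambda>k. n_step p n i k *\<^sub>R e k) sums ((evo_op e (\<lambda>k i. p i k) ^^ n) (e i)))"
    if H: "(\<forall>k. 0 < \<alpha> k) \<and> (\<forall>i. 0 < \<beta> i) \<and> 0 < M1 \<and> 0 < M2 \<and>
            (\<forall>i. summable (\<lambda>k. p i k * \<alpha> k) \<and> (\<Sum>k. p i k * \<alpha> k) \<le> M1 * \<beta> i) \<and>
            (\<forall>k. summable (\<lambda>i. p i k * \<beta> i) \<and> (\<Sum>i. p i k * \<beta> i) \<le> M2 * \<alpha> k)"
    for \<alpha> \<beta> M1 M2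
  proof -
    have M1: "0 < M1" and M2: "0 < M2" using H by auto
    have EB: "(\<forall>k. summable (\<lambda>i. coord e v i * p i k)) \<and>
         summable (\<lambda>k. (\<Sum>i. coord e v i * p i k)\<^sup>2) \<and>
         (\<Sum>k. (\<Sum>i. coord e v i * p i k)\<^sup>2) \<le> M1 * M2 * (norm v)\<^sup>2" for v
      by (rule evo_b[OF ON assms(2), of \<alpha> \<beta> M1 M2]) (use H in auto)
    have dom: "evo_dom e (\<lambda>k i. p i k) = UNIV"
      unfolding evo_dom_def using EB by auto
    have esum: "(\<lambda>k. (\<Sum>i. coord e v i * p i k) *\<^sub>R e k) sums evo_op e (\<lambda>k i. p i k) v" for v
      unfolding evo_def2 by (rule summable_sums, rule l2_summable[OF ON]) (use EB in blast)
    have enorm: "norm (evo_op e (\<lambda>k i. p i k) v) \<le> sqrt (M1 * M2) * norm v" for v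
      unfolding evo_def2
    proof (rule l2_bound[OF ON])
      show "summable (\<lambda>k. (\<Sum>i. coord e v i * p i k)\<^sup>2)" using EB by blast
      have "(sqrt (M1 * M2) * norm v)\<^sup>2 = M1 * M2 * (norm v)\<^sup>2"
        using M1 M2 by (simp add: power_mult_distrib)
      then show "(\<Sum>k. (\<Sum>i. coord e v i * p i k)\<^sup>2) \<le> (sqrt (M1 * M2) * norm v)\<^sup>2" using EB by simp
      show "0 \<le> sqrt (M1 * M2) * norm v" using M1 M2 by simp
    qed
    have s1: "summable (\<lambda>i. p i k * coord e w i)" for w k
      using EB[of w] by (simp add: algebra_simps)
    have s2: "summable (\<lambda>k. (\<Sum>i. p i k * coord e w i)\<^sup>2)" for w
      using EB[of w] by (simp add: algebra_simps)
    note LH = lin_helper[OF ON s1 s2]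
    have blE: "bounded_linear (evo_op e (\<lambda>k i. p i k))"
    proof (rule bounded_linear_intro[where K="sqrt (M1 * M2)"])
      show "evo_op e (\<lambda>k i. p i k) (x + y) = evo_op e (\<lambda>k i. p i k) x + evo_op e (\<lambda>k i. p i k) y" for x y
        unfolding evo_alt by (rule LH(1))
      show "evo_op e (\<lambda>k i. p i k) (r *\<^sub>R x) = r *\<^sub>R evo_op e (\<lambda>k i. p i k) x" for r x
        unfolding evo_alt by (rule LH(2))
      show "norm (evo_op e (\<lambda>k i. p i k) x) \<le> norm x * sqrt (M1 * M2)" for x
        using enorm[of x] by (simp add: mult.commute)
    qed
    have on: "onorm (evo_op e (\<lambda>k i. p i k)) \<le> sqrt (M1 * M2)"
      by (rule onorm_bound) (use M1 M2 enorm in auto)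
    have pw: "(\<lambda>k. n_step p n i k *\<^sub>R e k) sums ((evo_op e (\<lambda>k i. p i k) ^^ n) (e i))" for n i
    proof (induction n)
      case 0
      have "(\<lambda>k. n_step p 0 i k *\<^sub>R e k) = (\<lambda>k. if k = i then e k else 0)" by auto
      then show ?case using sums_single[of i e] by simp
    next
      case (Suc n)
      define w where "w = (evo_op e (\<lambda>k i. p i k) ^^ n) (e i)"
      have cw: "coord e w j = n_step p n i j" for j
        unfolding coord_def w_def by (rule coord_of_sums[OF ON Suc.IH])
      show ?case using esum[of w] unfolding cw by (simp add: w_def)
    qed
    show ?thesis using dom blE on pw by blast
  qed
  show ?thesis using partA hea partB by blast
qed

end
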